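(* In the setting described in the context, the map $\alpha\colon\Gamma\times\Gamma\to\mathrm M_{\mathcal U}$, $\alpha(g,h)=c(g,h)\varphi_{\mathcal U}(gh)^*$, is a $2$-cocycle with respect to the isometric action $\pi(g)T=\varphi_{\mathcal U}(g)T\varphi_{\mathcal U}(g)^*$ of $\Gamma$ on $\mathrm M_{\mathcal U}$, i.e. $\pi(g)\alpha(h,k)-\alpha(gh,k)+\alpha(g,hk)-\alpha(g,h)=0$ for all $g,h,k\in\Gamma$.
   Context: Fix a non-principal ultrafilter $\mathcal U$ on $\mathbb N$; $x_n=O_{\mathcal U}(y_n)$ means $x_n\le Cy_n$ for all $n$ in a set belonging to $\mathcal U$, for some constant $C$. Let $\Gamma=\langle S\mid R\rangle$ be finitely presented ($S,R$ finite, $\mathbb F_S$ free on $S$). For each $k$ fix a unitarily invariant, submultiplicative norm $\|\cdot\|$ on $\mathrm M_k(\mathbb C)$. For $\varphi\colon S\to\mathrm U(k)$ (extended to $\mathbb F_S$), $\mathrm{def}(\varphi)=\max_{r\in R}\|\varphi(r)-1_k\|$. Let $\varphi_n\colon S\to\mathrm U(k_n)$ with $\lim_{n\to\mathcal U}\mathrm{def}(\varphi_n)=0$. Let $\mathrm M_{\mathcal U}$ be the Banach space of bounded sequences $(T_n)$, $T_n\in\mathrm M_{k_n}(\mathbb C)$, modulo those with $\lim_{n\to\mathcal U}\|T_n\|=0$, and $\mathrm U_{\mathcal U}$ the group $\prod_n\mathrm U(k_n)$ modulo the normal subgroup of sequences with $\lim_{n\to\mathcal U}\|u_n-1_{k_n}\|=0$;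 $\mathrm U_{\mathcal U}$ acts isometrically on $\mathrm M_{\mathcal U}$ by left and right multiplication. The $\varphi_n$ induce a homomorphism $\varphi_{\mathcal U}\colon\Gamma\to\mathrm U_{\mathcal U}$ sending $g$ to the class of $(\varphi_n(w))_n$ for any $w\in\mathbb F_S$ representing $g$. Fix a section $\sigma\colon\Gamma\to\mathbb F_S$ of the canonical surjection and maps $\tilde\varphi_n\colon\Gamma\to\mathrm U(k_n)$ with $\tilde\varphi_n(1_\Gamma)=1$, $\tilde\varphi_n(g^{-1})=\tilde\varphi_n(g)^*$, $\|\varphi_n(\sigma(g))-\tilde\varphi_n(g)\|=O_{\mathcal U}(\mathrm{def}(\varphi_n))$ for all $g$. Let $c_n(g,h)=(\tilde\varphi_n(g)\tilde\varphi_n(h)-\tilde\varphi_n(gh))/\mathrm{def}(\varphi_n)$ if $\mathrm{def}(\varphi_n)>0$, else $0$; each sequence $(c_n(g,h))_n$ is $O_{\mathcal U}(1)$-bounded and $c(g,h)\in\mathrm M_{\mathcal U}$ denotes its class. *)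

theory Defs
  imports "Jordan_Normal_Form.Matrix" "HOL-Algebra.Group"
begin

definition nonprincipal_ultrafilter :: "nat filter \<Rightarrow> bool" where
  "nonprincipal_ultrafilter U \<longleftrightarrow> U \<noteq> bot \<and>
     (\<forall>P. eventually P U \<or> eventually (\<lambda>n. \<not> P n) U) \<and>
     (\<forall>m. eventually (\<lambda>n. n \<noteq> m) U)"

definition bigO_U :: "nat filter \<Rightarrow> (nat \<Rightarrow> real) \<Rightarrow> (nat \<Rightarrow> real) \<Rightarrow> bool" where
  "bigO_U U x y \<longleftrightarrow> (\<exists>C. eventually (\<lambda>n. x n \<le> C * y n) U)"

definition adj :: "complex mat \<Rightarrow> complex mat" where
  "adj A = mat (dim_col A) (dim_row A) (\<lambda>(i,j). cnj (A $$ (j,i)))"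

definition unitary_k :: "nat \<Rightarrow> complex mat \<Rightarrow> bool" where
  "unitary_k k A \<longleftrightarrow> A \<in> carrier_mat k k \<and> adj A * A = 1\<^sub>m k \<and> A * adj A = 1\<^sub>m k"

definition ui_submult_norm :: "nat \<Rightarrow> (complex mat \<Rightarrow> real) \<Rightarrow> bool" where
  "ui_submult_norm k N \<longleftrightarrow>
     (\<forall>A\<in>carrier_mat k k. N A \<ge> 0 \<and> (N A = 0 \<longleftrightarrow> A = 0\<^sub>m k k)) \<and>
     (\<forall>A\<in>carrier_mat k k. \<forall>c. N (c \<cdot>\<^sub>m A) = cmod c * N A) \<and>
     (\<forall>A\<in>carrier_mat k k. \<forall>B\<in>carrier_mat k k. N (A + B) \<le> N A + N B) \<and>
     (\<forall>A\<in>carrier_mat k k. \<forall>B\<in>carrier_mat k k. N (A * B) \<le> N A * N B) \<and>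
     (\<forall>A\<in>carrier_mat k k. \<forall>u v. unitary_k k u \<longrightarrow> unitary_k k v \<longrightarrow> N (u * A * v) = N A)"

text \<open>Elements of F_S are represented by words: a letter (s, False) stands for s,
  (s, True) for s^-1.\<close>
type_synonym 's word = "('s \<times> bool) list"

definition words :: "'s set \<Rightarrow> 's word set" where
  "words S = {w. fst ` set w \<subseteq> S}"

definition inv_word :: "'s word \<Rightarrow> 's word" where
  "inv_word w = rev (map (\<lambda>(s,b). (s, \<not> b)) w)"

text \<open>Congruence on words generated by free cancellation and insertion of relators;
  its classes are exactly the elements of F_S / <<R>>.\<close>
inductive pres_eq :: "'s word set \<Rightarrow> 's word \<Rightarrow> 's word \<Rightarrow> bool" for R where
  refl: "pres_eq R w w"
| sym: "pres_eq R u v \<Longrightarrow> pres_eq R v u"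
| trans: "pres_eq R u v \<Longrightarrow> pres_eq R v w \<Longrightarrow> pres_eq R u w"
| cancel: "pres_eq R (u @ [(s,b),(s,\<not>b)] @ v) (u @ v)"
| relator: "r \<in> R \<Longrightarrow> pres_eq R (u @ r @ v) (u @ v)"

fun grp_ev :: "('g,'b) monoid_scheme \<Rightarrow> ('s \<Rightarrow> 'g) \<Rightarrow> 's word \<Rightarrow> 'g" where
  "grp_ev G f [] = \<one>\<^bsub>G\<^esub>"
| "grp_ev G f ((s,b) # w) = (if b then inv\<^bsub>G\<^esub> (f s) else f s) \<otimes>\<^bsub>G\<^esub> grp_ev G f w"

text \<open>Gamma = <S | R>: S, R finite, and the canonical map F_S \<rightarrow> Gamma (induced by gen)
  is surjective with kernel the normal closure of R.\<close>
definition finite_presentation ::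
  "('g,'b) monoid_scheme \<Rightarrow> 's set \<Rightarrow> 's word set \<Rightarrow> ('s \<Rightarrow> 'g) \<Rightarrow> bool" where
  "finite_presentation G S R gen \<longleftrightarrow> group G \<and> finite S \<and> finite R \<and> R \<subseteq> words S \<and>
     gen ` S \<subseteq> carrier G \<and>
     (\<forall>g\<in>carrier G. \<exists>w\<in>words S. grp_ev G gen w = g) \<and>
     (\<forall>u\<in>words S. \<forall>v\<in>words S. grp_ev G gen u = grp_ev G gen v \<longleftrightarrow> pres_eq R u v)"

fun mat_ev :: "nat \<Rightarrow> ('s \<Rightarrow> complex mat) \<Rightarrow> 's word \<Rightarrow> complex mat" where
  "mat_ev k f [] = 1\<^sub>m k"
| "mat_ev k f ((s,b) # w) = (if b then adj (f s) else f s) * mat_ev k f w"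

text \<open>def(phi) = max over r in R of N(phi(r) - 1_k)  (taken to be 0 if R is empty).\<close>
definition dfct :: "nat \<Rightarrow> (complex mat \<Rightarrow> real) \<Rightarrow> 's word set \<Rightarrow> ('s \<Rightarrow> complex mat) \<Rightarrow> real" where
  "dfct k N R f = Max (insert 0 ((\<lambda>r. N (mat_ev k f r - 1\<^sub>m k)) ` R))"

text \<open>A bounded sequence (T n), T n in M_{k n}(C), represents 0 in M_U iff lim_U N(T n) = 0.\<close>
definition zero_in_MU :: "nat filter \<Rightarrow> (nat \<Rightarrow> nat) \<Rightarrow> (nat \<Rightarrow> complex mat \<Rightarrow> real)
     \<Rightarrow> (nat \<Rightarrow> complex mat) \<Rightarrow> bool" where
  "zero_in_MU U k N T \<longleftrightarrow> ((\<lambda>n. N (k n) (T n)) \<longlongrightarrow> 0) U"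

definition phiU_rep :: "(nat \<Rightarrow> nat) \<Rightarrow> (nat \<Rightarrow> 's \<Rightarrow> complex mat) \<Rightarrow> ('g \<Rightarrow> 's word)
     \<Rightarrow> nat \<Rightarrow> 'g \<Rightarrow> complex mat" where
  "phiU_rep k phi sigma n g = mat_ev (k n) (phi n) (sigma g)"

definition c_rep :: "('g,'b) monoid_scheme \<Rightarrow> (nat \<Rightarrow> nat) \<Rightarrow> (nat \<Rightarrow> complex mat \<Rightarrow> real)
     \<Rightarrow> 's word set \<Rightarrow> (nat \<Rightarrow> 's \<Rightarrow> complex mat) \<Rightarrow> (nat \<Rightarrow> 'g \<Rightarrow> complex mat)
     \<Rightarrow> nat \<Rightarrow> 'g \<Rightarrow> 'g \<Rightarrow> complex mat" where
  "c_rep G k N R phi phit n g h =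
     (let d = dfct (k n) (N (k n)) R (phi n) in
      if d > 0 then (complex_of_real (1 / d)) \<cdot>\<^sub>m (phit n g * phit n h - phit n (g \<otimes>\<^bsub>G\<^esub> h))
      else 0\<^sub>m (k n) (k n))"

definition alpha_rep :: "('g,'b) monoid_scheme \<Rightarrow> (nat \<Rightarrow> nat) \<Rightarrow> (nat \<Rightarrow> complex mat \<Rightarrow> real)
     \<Rightarrow> 's word set \<Rightarrow> (nat \<Rightarrow> 's \<Rightarrow> complex mat) \<Rightarrow> ('g \<Rightarrow> 's word) \<Rightarrow> (nat \<Rightarrow> 'g \<Rightarrow> complex mat)
     \<Rightarrow> nat \<Rightarrow> 'g \<Rightarrow> 'g \<Rightarrow> complex mat" where
  "alpha_rep G k N R phi sigma phit n g h =
     c_rep G k N R phi phit n g h * adj (phiU_rep k phi sigma n (g \<otimes>\<^bsub>G\<^esub> h))"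

definition pi_rep :: "(nat \<Rightarrow> nat) \<Rightarrow> (nat \<Rightarrow> 's \<Rightarrow> complex mat) \<Rightarrow> ('g \<Rightarrow> 's word)
     \<Rightarrow> nat \<Rightarrow> 'g \<Rightarrow> complex mat \<Rightarrow> complex mat" where
  "pi_rep k phi sigma n g T = phiU_rep k phi sigma n g * T * adj (phiU_rep k phi sigma n g)"

end

theory Submission
  imports Defs
begin


lemma adj_carrier[simp]: "A \<in> carrier_mat m n \<Longrightarrow> adj A \<in> carrier_mat n m"
  by (auto simp: adj_def)

lemma adj_adj: "A \<in> carrier_mat m n \<Longrightarrow> adj (adj A) = A"
  by (intro eq_matI, auto simp: adj_def)

lemma adj_one[simp]: "adj (1\<^sub>m m) = 1\<^sub>m m"
  by (intro eq_matI, auto simp: adj_def)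

lemma adj_mult:
  assumes A: "A \<in> carrier_mat m n" and B: "B \<in> carrier_mat n p"
  shows "adj (A * B) = adj B * adj A"
proof (rule eq_matI)
  fix i j assume i: "i < dim_row (adj B * adj A)" and j: "j < dim_col (adj B * adj A)"
  have "adj (A * B) $$ (i, j) = cnj ((A * B) $$ (j, i))" using A B i j by (auto simp: adj_def)
  also have "\<dots> = (\<Sum>x<n. cnj (A $$ (j, x)) * cnj (B $$ (x, i)))"
    using A B i j by (auto simp: adj_def scalar_prod_def row_def col_def sum_distrib_left lessThan_atLeast0)
  also have "\<dots> = (adj B * adj A) $$ (i, j)"
    using A B i j by (auto simp: adj_def scalar_prod_def row_def col_def lessThan_atLeast0 mult.commute intro: sum.cong)
  finally show "adj (A * B) $$ (i, j) = (adj B * adj A) $$ (i, j)" .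
qed (use A B in \<open>auto simp: adj_def\<close>)

lemma unitary_carrier: "unitary_k m u \<Longrightarrow> u \<in> carrier_mat m m"
  by (simp add: unitary_k_def)

lemma unitary_one: "unitary_k m (1\<^sub>m m)"
  by (simp add: unitary_k_def)

lemma unitary_adj: "unitary_k m u \<Longrightarrow> unitary_k m (adj u)"
  by (auto simp: unitary_k_def adj_adj)

lemma unitary_mult:
  assumes u: "unitary_k m u" and v: "unitary_k m v"
  shows "unitary_k m (u * v)"
proof -
  have c: "u \<in> carrier_mat m m" "v \<in> carrier_mat m m" "adj u \<in> carrier_mat m m" "adj v \<in> carrier_mat m m"
    using u v by (auto simp: unitary_k_def)
  have "adj (u * v) * (u * v) = adj v * (adj u * u) * v"
    using c by (simp add: adj_mult[OF c(1,2)] assoc_mult_mat[of _ m m _ m _ m] mult_carrier_mat[of _ m m _ m])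
  also have "\<dots> = 1\<^sub>m m" using u v c by (simp add: unitary_k_def right_mult_one_mat[of _ m m] left_mult_one_mat[of _ m m])
  finally have 1: "adj (u * v) * (u * v) = 1\<^sub>m m" .
  have "(u * v) * adj (u * v) = u * (v * adj v) * adj u"
    using c by (simp add: adj_mult[OF c(1,2)] assoc_mult_mat[of _ m m _ m _ m] mult_carrier_mat[of _ m m _ m])
  also have "\<dots> = 1\<^sub>m m" using u v c by (simp add: unitary_k_def right_mult_one_mat[of _ m m] left_mult_one_mat[of _ m m])
  finally show ?thesis using 1 c by (simp add: unitary_k_def)
qed

lemma mat_minus_ring:
  fixes A B :: "complex mat"
  assumes "A \<in> carrier_mat m m" "B \<in> carrier_mat m m"
  shows "A - B = A \<ominus>\<^bsub>ring_mat TYPE(complex) m b\<^esub> B"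
proof -
  interpret R: ring "ring_mat TYPE(complex) m b" by (rule ring_mat)
  have "\<ominus>\<^bsub>ring_mat TYPE(complex) m b\<^esub> B = - B"
    using assms by (intro R.minus_equality) (auto simp: ring_mat_simps)
  then show ?thesis using assms
    by (simp add: a_minus_def ring_mat_simps add_uminus_minus_mat)
qed



lemma (in ring) ring_id_W:
  assumes c: "ag \<in> carrier R" "agh' \<in> carrier R" "ahl' \<in> carrier R" "aghl' \<in> carrier R"
    "ag' \<in> carrier R" "al \<in> carrier R"
    "tg \<in> carrier R" "th \<in> carrier R" "tL \<in> carrier R" "tgh \<in> carrier R" "thl \<in> carrier R" "tghl \<in> carrier R"
  shows "ag \<otimes> ((th \<otimes> tL \<ominus> thl) \<otimes> ahl') \<otimes> ag' \<ominus> (tgh \<otimes> tL \<ominus> tghl) \<otimes> aghl'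
      \<oplus> (tg \<otimes> thl \<ominus> tghl) \<otimes> aghl' \<ominus> (tg \<otimes> th \<ominus> tgh) \<otimes> agh'
    = (ag \<ominus> tg) \<otimes> (th \<otimes> tL \<ominus> thl) \<otimes> ahl' \<otimes> ag'
      \<oplus> tg \<otimes> (th \<otimes> tL \<ominus> thl) \<otimes> (ahl' \<otimes> ag' \<ominus> aghl')
      \<oplus> (tg \<otimes> th \<ominus> tgh) \<otimes> (tL \<ominus> al) \<otimes> aghl'
      \<oplus> (tg \<otimes> th \<ominus> tgh) \<otimes> (al \<otimes> aghl' \<ominus> agh')"
  using c by algebra

lemma (in ring) ring_id_X:
  assumes c: "x \<in> carrier R" "y \<in> carrier R" "z \<in> carrier R" "a \<in> carrier R" "b \<in> carrier R" "d \<in> carrier R"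
  shows "x \<otimes> y \<ominus> z = (x \<ominus> a) \<otimes> y \<oplus> a \<otimes> (y \<ominus> b) \<oplus> (a \<otimes> b \<ominus> d) \<oplus> (d \<ominus> z)"
  using c by algebra

lemma (in ring) ring_id_inv:
  assumes c: "a \<in> carrier R" "b \<in> carrier R" "d \<in> carrier R" "a' \<in> carrier R" "b' \<in> carrier R" "d' \<in> carrier R"
    and u: "a' \<otimes> a = \<one>" "b' \<otimes> b = \<one>" "d \<otimes> d' = \<one>"
  shows "b' \<otimes> a' \<ominus> d' = b' \<otimes> a' \<otimes> (d \<ominus> a \<otimes> b) \<otimes> d'"
proof -
  have "b' \<otimes> a' \<otimes> (d \<ominus> a \<otimes> b) \<otimes> d' = b' \<otimes> a' \<otimes> (d \<otimes> d') \<ominus> b' \<otimes> (a' \<otimes> a) \<otimes> b \<otimes> d'"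
    using c by algebra
  also have "\<dots> = b' \<otimes> a' \<ominus> d'" using c u by (simp add: m_assoc)
  finally show ?thesis by simp
qed

lemma (in ring) ring_id_inv2:
  assumes c: "a \<in> carrier R" "b \<in> carrier R" "d \<in> carrier R" "a' \<in> carrier R" "d' \<in> carrier R"
    and u: "a' \<otimes> a = \<one>" "d \<otimes> d' = \<one>"
  shows "b \<otimes> d' \<ominus> a' = a' \<otimes> (a \<otimes> b \<ominus> d) \<otimes> d'"
proof -
  have "a' \<otimes> (a \<otimes> b \<ominus> d) \<otimes> d' = (a' \<otimes> a) \<otimes> b \<otimes> d' \<ominus> a' \<otimes> (d \<otimes> d')"
    using c by algebra
  also have "\<dots> = b \<otimes> d' \<ominus> a'" using c u by (simp add: m_assoc)
  finally show ?thesis by simp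
qed



lemmas sqc = mult_carrier_mat[of _ m m _ m] minus_carrier_mat[of _ m m] add_carrier_mat for m

lemma mat_id_X:
  fixes x y z a b d :: "complex mat"
  assumes c: "x \<in> carrier_mat m m" "y \<in> carrier_mat m m" "z \<in> carrier_mat m m" "a \<in> carrier_mat m m" "b \<in> carrier_mat m m" "d \<in> carrier_mat m m"
  shows "x * y - z = (x - a) * y + a * (y - b) + (a * b - d) + (d - z)"
proof -
  interpret R: ring "ring_mat TYPE(complex) m ()" by (rule ring_mat)
  show ?thesis using R.ring_id_X[of x y z a b d] c
    by (simp add: ring_mat_simps mat_minus_ring[symmetric] sqc)
qed

lemma mat_id_W:
  fixes ag agh' ahl' aghl' ag' al tg th tL tgh thl tghl :: "complex mat"
  assumes c: "ag \<in> carrier_mat m m" "agh' \<in> carrier_mat m m" "ahl' \<in> carrier_mat m m" "aghl' \<in> carrier_mat m m"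
    "ag' \<in> carrier_mat m m" "al \<in> carrier_mat m m"
    "tg \<in> carrier_mat m m" "th \<in> carrier_mat m m" "tL \<in> carrier_mat m m" "tgh \<in> carrier_mat m m" "thl \<in> carrier_mat m m" "tghl \<in> carrier_mat m m"
  shows "ag * ((th * tL - thl) * ahl') * ag' - (tgh * tL - tghl) * aghl'
      + (tg * thl - tghl) * aghl' - (tg * th - tgh) * agh'
    = (ag - tg) * (th * tL - thl) * ahl' * ag'
      + tg * (th * tL - thl) * (ahl' * ag' - aghl')
      + (tg * th - tgh) * (tL - al) * aghl'
      + (tg * th - tgh) * (al * aghl' - agh')"
proof -
  interpret R: ring "ring_mat TYPE(complex) m ()" by (rule ring_mat)
  show ?thesis using R.ring_id_W[of ag agh' ahl' aghl' ag' al tg th tL tgh thl tghl] c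
    by (simp add: ring_mat_simps mat_minus_ring[symmetric] sqc)
qed

lemma mat_id_inv:
  fixes a b d :: "complex mat"
  assumes u: "unitary_k m a" "unitary_k m b" "unitary_k m d"
  shows "adj b * adj a - adj d = adj b * adj a * (d - a * b) * adj d"
proof -
  interpret R: ring "ring_mat TYPE(complex) m ()" by (rule ring_mat)
  have c: "a \<in> carrier_mat m m" "b \<in> carrier_mat m m" "d \<in> carrier_mat m m" using u by (auto simp: unitary_k_def)
  show ?thesis using R.ring_id_inv[of a b d "adj a" "adj b" "adj d"] c u
    by (simp add: ring_mat_simps mat_minus_ring[symmetric] sqc unitary_k_def)
qed

lemma mat_id_inv2:
  fixes a b d :: "complex mat"
  assumes u: "unitary_k m a" "b \<in> carrier_mat m m" "unitary_k m d"
  shows "b * adj d - adj a = adj a * (a * b - d) * adj d"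
proof -
  interpret R: ring "ring_mat TYPE(complex) m ()" by (rule ring_mat)
  have c: "a \<in> carrier_mat m m" "d \<in> carrier_mat m m" using u by (auto simp: unitary_k_def)
  show ?thesis using R.ring_id_inv2[of a b d "adj a" "adj d"] c u
    by (simp add: ring_mat_simps mat_minus_ring[symmetric] sqc unitary_k_def)
qed

context
  fixes m :: nat and N :: "complex mat \<Rightarrow> real"
  assumes nrm: "ui_submult_norm m N"
begin

lemma N_nonneg: "A \<in> carrier_mat m m \<Longrightarrow> 0 \<le> N A"
  using nrm by (simp add: ui_submult_norm_def)

lemma N_add: "A \<in> carrier_mat m m \<Longrightarrow> B \<in> carrier_mat m m \<Longrightarrow> N (A + B) \<le> N A + N B"
  using nrm by (simp add: ui_submult_norm_def)

lemma N_mult: "A \<in> carrier_mat m m \<Longrightarrow> B \<in> carrier_mat m m \<Longrightarrow> N (A * B) \<le> N A * N B"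
  using nrm by (simp add: ui_submult_norm_def)

lemma N_smult: "A \<in> carrier_mat m m \<Longrightarrow> N (c \<cdot>\<^sub>m A) = cmod c * N A"
  using nrm by (simp add: ui_submult_norm_def)

lemma N_zero: "N (0\<^sub>m m m) = 0"
  using nrm by (simp add: ui_submult_norm_def)

lemma N_uleft: assumes "unitary_k m u" "A \<in> carrier_mat m m" shows "N (u * A) = N A"
proof -
  have "N (u * A * 1\<^sub>m m) = N A" using nrm assms unitary_one[of m] unfolding ui_submult_norm_def by blast
  moreover have "u * A * 1\<^sub>m m = u * A" using assms
    by (intro right_mult_one_mat) (auto simp: unitary_k_def)
  ultimately show ?thesis by simp
qed

lemma N_uright: assumes "unitary_k m u" "A \<in> carrier_mat m m" shows "N (A * u) = N A"
proof -
  have "N (1\<^sub>m m * A * u) = N A" using nrm assms unitary_one[of m] unfolding ui_submult_norm_def by blast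
  moreover have "1\<^sub>m m * A = A" using assms by (intro left_mult_one_mat) auto
  ultimately show ?thesis by simp
qed

lemma N_commute: assumes "A \<in> carrier_mat m m" "B \<in> carrier_mat m m" shows "N (A - B) = N (B - A)"
proof -
  have "A - B = (-1) \<cdot>\<^sub>m (B - A)" using assms by (intro eq_matI) auto
  then show ?thesis using N_smult[of "B - A" "-1"] assms by (simp add: minus_carrier_mat)
qed

lemma N_mult_le:
  assumes "A \<in> carrier_mat m m" "B \<in> carrier_mat m m" "N A \<le> x" "N B \<le> y"
  shows "N (A * B) \<le> x * y"
proof -
  have "N (A * B) \<le> N A * N B" using N_mult assms by simp
  also have "\<dots> \<le> x * y" using assms N_nonneg by (intro mult_mono) (auto intro: order_trans)
  finally show ?thesis .
qed

lemma N_prod_bound: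
  assumes u: "unitary_k m ag" "unitary_k m ah" "unitary_k m ahl"
    "unitary_k m tg" "unitary_k m th" "unitary_k m tL" "unitary_k m thl"
    and e1: "N (ag - tg) \<le> e" and e2: "N (ah - th) \<le> e" and e3: "N (ahl - thl) \<le> e"
    and e4: "N (al - tL) \<le> e" and al: "unitary_k m al"
    and e5: "N (ah * al - ahl) \<le> e"
  shows "N (th * tL - thl) \<le> 4 * e"
proof -
  have c: "ag \<in> carrier_mat m m" "ah \<in> carrier_mat m m" "ahl \<in> carrier_mat m m" "al \<in> carrier_mat m m"
    "tg \<in> carrier_mat m m" "th \<in> carrier_mat m m" "tL \<in> carrier_mat m m" "thl \<in> carrier_mat m m"
    using u al by (auto simp: unitary_k_def)
  have eq: "th * tL - thl = (th - ah) * tL + ah * (tL - al) + (ah * al - ahl) + (ahl - thl)"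
    using mat_id_X c by blast
  have "N (th * tL - thl) \<le> N ((th - ah) * tL) + N (ah * (tL - al)) + N (ah * al - ahl) + N (ahl - thl)"
    unfolding eq using c N_add
    by (smt (verit, best) add_carrier_mat minus_carrier_mat mult_carrier_mat)
  also have "N ((th - ah) * tL) = N (ah - th)" using N_uright[of tL "th - ah"] u c N_commute
    by (simp add: minus_carrier_mat)
  also have "N (ah * (tL - al)) = N (al - tL)" using N_uleft[of ah "tL - al"] u c N_commute
    by (simp add: minus_carrier_mat)
  finally show ?thesis using e2 e3 e4 e5 by simp
qed


lemma N_key:
  assumes u: "unitary_k m ag" "unitary_k m ah" "unitary_k m al" "unitary_k m agh" "unitary_k m ahl" "unitary_k m aghl"
    "unitary_k m tg" "unitary_k m th" "unitary_k m tL" "unitary_k m tgh" "unitary_k m thl" "unitary_k m tghl"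
    and e: "N (ag - tg) \<le> e" "N (ah - th) \<le> e" "N (al - tL) \<le> e" "N (agh - tgh) \<le> e" "N (ahl - thl) \<le> e"
      "N (ag * ah - agh) \<le> e" "N (ah * al - ahl) \<le> e" "N (agh * al - aghl) \<le> e" "N (ag * ahl - aghl) \<le> e"
  shows "N (ag * ((th * tL - thl) * adj ahl) * adj ag - (tgh * tL - tghl) * adj aghl
      + (tg * thl - tghl) * adj aghl - (tg * th - tgh) * adj agh) \<le> 16 * e\<^sup>2"
proof -
  have c: "ag \<in> carrier_mat m m" "ah \<in> carrier_mat m m" "al \<in> carrier_mat m m" "agh \<in> carrier_mat m m"
    "ahl \<in> carrier_mat m m" "aghl \<in> carrier_mat m m"
    "tg \<in> carrier_mat m m" "th \<in> carrier_mat m m" "tL \<in> carrier_mat m m" "tgh \<in> carrier_mat m m"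
    "thl \<in> carrier_mat m m" "tghl \<in> carrier_mat m m"
    using u by (auto simp: unitary_k_def)
  have ua: "unitary_k m (adj ag)" "unitary_k m (adj agh)" "unitary_k m (adj ahl)" "unitary_k m (adj aghl)"
    using u unitary_adj by auto
  have ca: "adj ag \<in> carrier_mat m m" "adj agh \<in> carrier_mat m m" "adj ahl \<in> carrier_mat m m" "adj aghl \<in> carrier_mat m m"
    using c by auto
  define X where "X = th * tL - thl"
  define Y where "Y = tg * th - tgh"
  have cX: "X \<in> carrier_mat m m" "Y \<in> carrier_mat m m" using c by (auto simp: X_def Y_def minus_carrier_mat)
  have hX: "N X \<le> 4 * e" unfolding X_def
    by (rule N_prod_bound[of ag ah ahl tg th tL thl e al]) (use u e in auto)
  have hY: "N Y \<le> 4 * e" unfolding Y_def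
    by (rule N_prod_bound[of al ag agh tL tg th tgh e ah]) (use u e in auto)
  have e0: "0 \<le> e" using e(1) N_nonneg[of "ag - tg"] c by (auto simp: minus_carrier_mat)
  define D2 where "D2 = adj ahl * adj ag * (aghl - ag * ahl) * adj aghl"
  define D4 where "D4 = adj agh * (agh * al - aghl) * adj aghl"
  have cD: "D2 \<in> carrier_mat m m" "D4 \<in> carrier_mat m m" using c ca
    by (auto simp: D2_def D4_def sqc)
  have W: "ag * (X * adj ahl) * adj ag - (tgh * tL - tghl) * adj aghl
      + (tg * thl - tghl) * adj aghl - Y * adj agh
    = (ag - tg) * X * adj ahl * adj ag + tg * X * D2 + Y * (tL - al) * adj aghl + Y * D4"
    unfolding X_def Y_def D2_def D4_def
    using mat_id_W[of ag m "adj agh" "adj ahl" "adj aghl" "adj ag" al tg th tL tgh thl tghl] c ca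
      mat_id_inv[of m ag ahl aghl] mat_id_inv2[of m agh al aghl] u by simp
  have n1: "N ((ag - tg) * X * adj ahl * adj ag) \<le> e * (4 * e)"
  proof -
    have "N ((ag - tg) * X * adj ahl * adj ag) = N ((ag - tg) * X)"
      using N_uright[OF ua(1), of "(ag - tg) * X * adj ahl"] N_uright[OF ua(3), of "(ag - tg) * X"] c cX ca by (simp add: sqc)
    also have "\<dots> \<le> e * (4 * e)" using N_mult_le[of "ag - tg" X e "4 * e"] e hX c cX by (simp add: sqc)
    finally show ?thesis .
  qed
  have nD2: "N D2 \<le> e"
  proof -
    have "N D2 = N (adj ahl * (adj ag * (aghl - ag * ahl)))" unfolding D2_def
      using N_uright[OF ua(4), of "adj ahl * adj ag * (aghl - ag * ahl)"] c ca by (simp add: sqc assoc_mult_mat[of _ m m _ m _ m])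
    also have "\<dots> = N (aghl - ag * ahl)" using N_uleft[OF ua(3), of "adj ag * (aghl - ag * ahl)"] N_uleft[OF ua(1), of "aghl - ag * ahl"] c ca by (simp add: sqc)
    also have "\<dots> = N (ag * ahl - aghl)" using N_commute[of aghl "ag * ahl"] c by (simp add: sqc)
    finally show ?thesis using e by simp
  qed
  have nD4: "N D4 \<le> e"
  proof -
    have "N D4 = N (adj agh * (agh * al - aghl))" unfolding D4_def
      using N_uright[OF ua(4), of "adj agh * (agh * al - aghl)"] c ca by (simp add: sqc)
    also have "\<dots> = N (agh * al - aghl)" using N_uleft[OF ua(2), of "agh * al - aghl"] c ca by (simp add: sqc)
    finally show ?thesis using e by simp
  qed
  have n2: "N (tg * X * D2) \<le> 4 * e * e"
  proof -
    have "tg * X * D2 = tg * (X * D2)" using c cX cD by (simp add: assoc_mult_mat[of _ m m])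
    then have "N (tg * X * D2) = N (X * D2)" using N_uleft[OF u(7), of "X * D2"] c cX cD by (simp add: sqc)
    also have "\<dots> \<le> 4 * e * e" using N_mult_le[of X D2 "4 * e" e] hX nD2 cX cD by simp
    finally show ?thesis .
  qed
  have n3: "N (Y * (tL - al) * adj aghl) \<le> 4 * e * e"
  proof -
    have "N (Y * (tL - al) * adj aghl) = N (Y * (tL - al))" using N_uright[OF ua(4), of "Y * (tL - al)"] c cX by (simp add: sqc)
    also have "\<dots> \<le> 4 * e * e" using N_mult_le[of Y "tL - al" "4 * e" e] hY e N_commute[of tL al] c cX by (simp add: sqc)
    finally show ?thesis .
  qed
  have n4: "N (Y * D4) \<le> 4 * e * e" using N_mult_le[of Y D4 "4 * e" e] hY nD4 cX cD by simp
  have "N ((ag - tg) * X * adj ahl * adj ag + tg * X * D2 + Y * (tL - al) * adj aghl + Y * D4)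
     \<le> N ((ag - tg) * X * adj ahl * adj ag) + N (tg * X * D2) + N (Y * (tL - al) * adj aghl) + N (Y * D4)"
    using N_add c cX ca cD
    by (smt (verit, best) add_carrier_mat minus_carrier_mat mult_carrier_mat)
  also have "\<dots> \<le> 16 * e\<^sup>2" using n1 n2 n3 n4 by (simp add: power2_eq_square)
  finally show ?thesis using W unfolding X_def Y_def by simp
qed

end



definition filt :: "'s set \<Rightarrow> 's word \<Rightarrow> 's word" where
  "filt S w = filter (\<lambda>x. fst x \<in> S) w"

lemma filt_words: "w \<in> words S \<Longrightarrow> filt S w = w"
  by (auto simp: filt_def words_def intro: filter_True)

lemma filt_in_words: "filt S w \<in> words S"
  by (auto simp: filt_def words_def)

lemma words_append: "u @ v \<in> words S \<longleftrightarrow> u \<in> words S \<and> v \<in> words S"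
  by (auto simp: words_def)

lemma mat_ev_unitary:
  assumes "\<And>s. s \<in> S \<Longrightarrow> unitary_k m (f s)" "w \<in> words S"
  shows "unitary_k m (mat_ev m f w)"
  using assms(2)
proof (induction w)
  case Nil then show ?case by (simp add: unitary_one)
next
  case (Cons x w)
  obtain s b where x: "x = (s, b)" by (cases x)
  have s: "s \<in> S" and w: "w \<in> words S" using Cons.prems x by (auto simp: words_def)
  have "unitary_k m (if b then adj (f s) else f s)" using assms(1)[OF s] unitary_adj by auto
  then show ?case using Cons.IH[OF w] x by (simp add: unitary_mult)
qed

lemma mat_ev_append:
  assumes "\<And>s. s \<in> S \<Longrightarrow> unitary_k m (f s)" "u \<in> words S" "v \<in> words S"
  shows "mat_ev m f (u @ v) = mat_ev m f u * mat_ev m f v"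
  using assms(2)
proof (induction u)
  case Nil
  have "mat_ev m f v \<in> carrier_mat m m" using mat_ev_unitary[of S m f v] assms unitary_carrier by blast
  then show ?case by simp
next
  case (Cons x w)
  obtain s b where x: "x = (s, b)" by (cases x)
  have s: "s \<in> S" and w: "w \<in> words S" using Cons.prems x by (auto simp: words_def)
  have c: "(if b then adj (f s) else f s) \<in> carrier_mat m m" using assms(1)[OF s] unitary_adj unitary_carrier by auto
  have c2: "mat_ev m f w \<in> carrier_mat m m" "mat_ev m f v \<in> carrier_mat m m"
    using mat_ev_unitary[of S m f] assms(1) w assms(3) unitary_carrier by blast+
  show ?case using Cons.IH[OF w] x c c2 by simp
qed

lemma (in ring) ring_id_rel:
  assumes "a \<in> carrier R" "b \<in> carrier R" "c \<in> carrier R"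
  shows "a \<otimes> (b \<otimes> c) \<ominus> a \<otimes> c = a \<otimes> ((b \<ominus> \<one>) \<otimes> c)"
  using assms by algebra

lemma mat_id_rel:
  fixes a b c :: "complex mat"
  assumes c: "a \<in> carrier_mat m m" "b \<in> carrier_mat m m" "c \<in> carrier_mat m m"
  shows "a * (b * c) - a * c = a * ((b - 1\<^sub>m m) * c)"
proof -
  interpret R: ring "ring_mat TYPE(complex) m ()" by (rule ring_mat)
  show ?thesis using R.ring_id_rel[of a b c] c
    by (simp add: ring_mat_simps mat_minus_ring[symmetric] sqc)
qed

context
  fixes k :: "nat \<Rightarrow> nat" and N :: "nat \<Rightarrow> complex mat \<Rightarrow> real"
    and phi :: "nat \<Rightarrow> 's \<Rightarrow> complex mat" and S :: "'s set" and R :: "'s word set"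
  assumes norms: "\<And>m. ui_submult_norm m (N m)"
    and phiu: "\<And>n s. s \<in> S \<Longrightarrow> unitary_k (k n) (phi n s)"
    and RS: "R \<subseteq> words S" and finR: "finite R"
begin

lemma dfct_ge: "r \<in> R \<Longrightarrow> N (k n) (mat_ev (k n) (phi n) r - 1\<^sub>m (k n)) \<le> dfct (k n) (N (k n)) R (phi n)"
  unfolding dfct_def using finR by (intro Max_ge) auto

lemma dfct_nonneg: "0 \<le> dfct (k n) (N (k n)) R (phi n)"
  unfolding dfct_def using finR by (intro Max_ge) auto

lemma Mu: "w \<in> words S \<Longrightarrow> unitary_k (k n) (mat_ev (k n) (phi n) w)"
  by (rule mat_ev_unitary[OF phiu])

lemma Mc: "w \<in> words S \<Longrightarrow> mat_ev (k n) (phi n) w \<in> carrier_mat (k n) (k n)"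
  using Mu unitary_carrier by blast

lemma Mapp: "u \<in> words S \<Longrightarrow> v \<in> words S \<Longrightarrow>
    mat_ev (k n) (phi n) (u @ v) = mat_ev (k n) (phi n) u * mat_ev (k n) (phi n) v"
  using mat_ev_append[of S "k n" "phi n" u v] phiu by blast

lemma pres_bound:
  assumes "pres_eq R u v"
  shows "\<exists>C. \<forall>n. N (k n) (mat_ev (k n) (phi n) (filt S u) - mat_ev (k n) (phi n) (filt S v))
            \<le> C * dfct (k n) (N (k n)) R (phi n)"
  using assms
proof (induction rule: pres_eq.induct)
  case (refl w)
  have "N (k n) (mat_ev (k n) (phi n) (filt S w) - mat_ev (k n) (phi n) (filt S w)) = 0" for n
    using minus_r_inv_mat[OF Mc[OF filt_in_words[of S w]]] N_zero[OF norms] by simp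
  then show ?case by (intro exI[of _ 0]) simp
next
  case (sym u v)
  then obtain C where C: "\<And>n. N (k n) (mat_ev (k n) (phi n) (filt S u) - mat_ev (k n) (phi n) (filt S v))
            \<le> C * dfct (k n) (N (k n)) R (phi n)" by blast
  show ?case
    by (intro exI[of _ C] allI, subst N_commute[OF norms Mc[OF filt_in_words] Mc[OF filt_in_words]])
       (rule C)
next
  case (trans u v w)
  then obtain C1 C2 where C1: "\<And>n. N (k n) (mat_ev (k n) (phi n) (filt S u) - mat_ev (k n) (phi n) (filt S v))
            \<le> C1 * dfct (k n) (N (k n)) R (phi n)"
    and C2: "\<And>n. N (k n) (mat_ev (k n) (phi n) (filt S v) - mat_ev (k n) (phi n) (filt S w))
            \<le> C2 * dfct (k n) (N (k n)) R (phi n)" by blast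
  show ?case
  proof (intro exI[of _ "C1 + C2"] allI)
    fix n
    let ?A = "mat_ev (k n) (phi n) (filt S u)" and ?B = "mat_ev (k n) (phi n) (filt S v)"
      and ?D = "mat_ev (k n) (phi n) (filt S w)"
    have c: "?A \<in> carrier_mat (k n) (k n)" "?B \<in> carrier_mat (k n) (k n)" "?D \<in> carrier_mat (k n) (k n)"
      using Mc[OF filt_in_words] by auto
    have "?A - ?D = (?A - ?B) + (?B - ?D)" using c by (intro eq_matI) auto
    then have "N (k n) (?A - ?D) \<le> N (k n) (?A - ?B) + N (k n) (?B - ?D)"
      using N_add[OF norms, of "?A - ?B" "k n" "?B - ?D"] c by (simp add: minus_carrier_mat)
    also have "\<dots> \<le> (C1 + C2) * dfct (k n) (N (k n)) R (phi n)" using C1[of n] C2[of n] by (simp add: algebra_simps)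
    finally show "N (k n) (?A - ?D) \<le> (C1 + C2) * dfct (k n) (N (k n)) R (phi n)" .
  qed
next
  case (cancel u s b v)
  have "mat_ev (k n) (phi n) (filt S (u @ [(s, b), (s, \<not> b)] @ v)) = mat_ev (k n) (phi n) (filt S (u @ v))" for n
  proof (cases "s \<in> S")
    case True
    have f: "filt S (u @ [(s, b), (s, \<not> b)] @ v) = filt S u @ [(s, b), (s, \<not> b)] @ filt S v"
      "filt S (u @ v) = filt S u @ filt S v" using True by (auto simp: filt_def)
    have w2: "[(s, b), (s, \<not> b)] \<in> words S" using True by (auto simp: words_def)
    have one: "mat_ev (k n) (phi n) [(s, b), (s, \<not> b)] = 1\<^sub>m (k n)"
      using phiu[OF True, of n] unitary_adj[OF phiu[OF True, of n]]
      by (cases b) (auto simp: unitary_k_def right_mult_one_mat[of _ "k n" "k n"])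
    have "mat_ev (k n) (phi n) (filt S u @ [(s, b), (s, \<not> b)] @ filt S v)
       = mat_ev (k n) (phi n) (filt S u) * (mat_ev (k n) (phi n) [(s, b), (s, \<not> b)] * mat_ev (k n) (phi n) (filt S v))"
      using Mapp[of "filt S u" "[(s, b), (s, \<not> b)] @ filt S v" n] Mapp[of "[(s, b), (s, \<not> b)]" "filt S v" n]
        w2 filt_in_words[of S u] filt_in_words[of S v] by (metis words_append)
    also have "\<dots> = mat_ev (k n) (phi n) (filt S u @ filt S v)"
      unfolding one using Mc[OF filt_in_words[of S v], of n] Mapp[of "filt S u" "filt S v" n] filt_in_words[of S u] filt_in_words[of S v] by simp
    finally show ?thesis unfolding f .
  next
    case False
    then show ?thesis by (simp add: filt_def)
  qed
  then show ?case using minus_r_inv_mat[OF Mc[OF filt_in_words]] N_zero[OF norms] by (intro exI[of _ 0]) simp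
next
  case (relator r u v)
  have r: "r \<in> words S" using relator RS by auto
  show ?case
  proof (intro exI[of _ 1] allI)
    fix n
    have f: "filt S (u @ r @ v) = filt S u @ r @ filt S v" "filt S (u @ v) = filt S u @ filt S v"
      using filt_words[OF r] by (auto simp: filt_def)
    let ?A = "mat_ev (k n) (phi n) (filt S u)" and ?B = "mat_ev (k n) (phi n) r"
      and ?D = "mat_ev (k n) (phi n) (filt S v)"
    have c: "?A \<in> carrier_mat (k n) (k n)" "?B \<in> carrier_mat (k n) (k n)" "?D \<in> carrier_mat (k n) (k n)"
      using Mc[OF filt_in_words] Mc[OF r] by auto
    have e: "mat_ev (k n) (phi n) (filt S (u @ r @ v)) - mat_ev (k n) (phi n) (filt S (u @ v))
        = ?A * ((?B - 1\<^sub>m (k n)) * ?D)"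
      unfolding f using Mapp[of "filt S u" "r @ filt S v" n] Mapp[of r "filt S v" n] Mapp[of "filt S u" "filt S v" n]
        filt_in_words[of S u] filt_in_words[of S v] r mat_id_rel[OF c]
      by (simp add: words_append)
    have "N (k n) (?A * ((?B - 1\<^sub>m (k n)) * ?D)) = N (k n) (?B - 1\<^sub>m (k n))"
      using N_uleft[OF norms Mu[OF filt_in_words[of S u], of n], of "(?B - 1\<^sub>m (k n)) * ?D"]
        N_uright[OF norms Mu[OF filt_in_words[of S v], of n], of "?B - 1\<^sub>m (k n)"] c
      by (simp add: sqc)
    also have "\<dots> \<le> 1 * dfct (k n) (N (k n)) R (phi n)" using dfct_ge[OF relator] by simp
    finally show "N (k n) (mat_ev (k n) (phi n) (filt S (u @ r @ v)) - mat_ev (k n) (phi n) (filt S (u @ v)))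
        \<le> 1 * dfct (k n) (N (k n)) R (phi n)" using e by simp
  qed
qed

end



lemma smult_W:
  fixes a b c e f X Y Z1 Z2 :: "complex mat"
  assumes cs: "a \<in> carrier_mat m m" "b \<in> carrier_mat m m" "c \<in> carrier_mat m m" "e \<in> carrier_mat m m"
    "f \<in> carrier_mat m m" "X \<in> carrier_mat m m" "Y \<in> carrier_mat m m" "Z1 \<in> carrier_mat m m" "Z2 \<in> carrier_mat m m"
  shows "a * ((s \<cdot>\<^sub>m X) * b) * c - (s \<cdot>\<^sub>m Z1) * e + (s \<cdot>\<^sub>m Z2) * e - (s \<cdot>\<^sub>m Y) * f
    = s \<cdot>\<^sub>m (a * (X * b) * c - Z1 * e + Z2 * e - Y * f)"
proof -
  have 1: "a * ((s \<cdot>\<^sub>m X) * b) * c = s \<cdot>\<^sub>m (a * (X * b) * c)"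
    using cs mult_smult_assoc_mat[of X m m b m s] mult_smult_distrib[of a m m "X * b" m s]
      mult_smult_assoc_mat[of "a * (X * b)" m m c m s] by (simp add: sqc)
  have 2: "(s \<cdot>\<^sub>m Z1) * e = s \<cdot>\<^sub>m (Z1 * e)" "(s \<cdot>\<^sub>m Z2) * e = s \<cdot>\<^sub>m (Z2 * e)" "(s \<cdot>\<^sub>m Y) * f = s \<cdot>\<^sub>m (Y * f)"
    using cs by (simp_all add: mult_smult_assoc_mat[of _ m m])
  have c3: "a * (X * b) * c \<in> carrier_mat m m" "Z1 * e \<in> carrier_mat m m" "Z2 * e \<in> carrier_mat m m" "Y * f \<in> carrier_mat m m"
    using cs by (auto simp: sqc)
  show ?thesis unfolding 1 2 using carrier_matD[OF c3(1)] carrier_matD[OF c3(2)] carrier_matD[OF c3(3)] carrier_matD[OF c3(4)]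
    by (intro eq_matI) (auto simp: algebra_simps)
qed

lemma grp_ev_carrier:
  assumes "group G" "gen ` S \<subseteq> carrier G" "w \<in> words S"
  shows "grp_ev G gen w \<in> carrier G"
  using assms(3)
proof (induction w)
  case Nil then show ?case using assms(1) group.is_monoid monoid.one_closed by fastforce
next
  case (Cons x w)
  obtain s b where x: "x = (s, b)" by (cases x)
  have s: "s \<in> S" and w: "w \<in> words S" using Cons.prems x by (auto simp: words_def)
  have "gen s \<in> carrier G" using s assms(2) by auto
  then show ?case using Cons.IH[OF w] x assms(1) by (auto intro: group.inv_closed monoid.m_closed group.is_monoid)
qed

lemma grp_ev_append:
  assumes "group G" "gen ` S \<subseteq> carrier G" "u \<in> words S" "v \<in> words S"
  shows "grp_ev G gen (u @ v) = grp_ev G gen u \<otimes>\<^bsub>G\<^esub> grp_ev G gen v"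
  using assms(3)
proof (induction u)
  case Nil then show ?case using grp_ev_carrier[OF assms(1,2,4)] assms(1)
    by (simp add: group.is_monoid monoid.l_one)
next
  case (Cons x w)
  obtain s b where x: "x = (s, b)" by (cases x)
  have s: "s \<in> S" and w: "w \<in> words S" using Cons.prems x by (auto simp: words_def)
  have gs: "gen s \<in> carrier G" using s assms(2) by auto
  have "(if b then inv\<^bsub>G\<^esub> (gen s) else gen s) \<in> carrier G" using gs assms(1) by (auto intro: group.inv_closed)
  then show ?case using Cons.IH[OF w] x grp_ev_carrier[OF assms(1,2) w] grp_ev_carrier[OF assms(1,2,4)]
    by (simp add: monoid.m_assoc[OF group.is_monoid[OF assms(1)]])
qed



theorem corollary3p2:
  fixes U :: "nat filter"
    and k :: "nat \<Rightarrow> nat"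
    and N :: "nat \<Rightarrow> complex mat \<Rightarrow> real"
    and G :: "('g, 'b) monoid_scheme"
    and S :: "'s set" and R :: "'s word set" and gen :: "'s \<Rightarrow> 'g"
    and phi :: "nat \<Rightarrow> 's \<Rightarrow> complex mat"
    and sigma :: "'g \<Rightarrow> 's word"
    and phit :: "nat \<Rightarrow> 'g \<Rightarrow> complex mat"
  assumes U: "nonprincipal_ultrafilter U"
    and norms: "\<And>m. ui_submult_norm m (N m)"
    and pres: "finite_presentation G S R gen"
    and phi_unitary: "\<And>n s. s \<in> S \<Longrightarrow> unitary_k (k n) (phi n s)"
    and def_lim: "((\<lambda>n. dfct (k n) (N (k n)) R (phi n)) \<longlongrightarrow> 0) U"
    and sigma: "\<And>g. g \<in> carrier G \<Longrightarrow> sigma g \<in> words S \<and> grp_ev G gen (sigma g) = g"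
    and phit_unitary: "\<And>n g. g \<in> carrier G \<Longrightarrow> unitary_k (k n) (phit n g)"
    and phit_one: "\<And>n. phit n \<one>\<^bsub>G\<^esub> = 1\<^sub>m (k n)"
    and phit_inv: "\<And>n g. g \<in> carrier G \<Longrightarrow> phit n (inv\<^bsub>G\<^esub> g) = adj (phit n g)"
    and phit_close: "\<And>g. g \<in> carrier G \<Longrightarrow>
       bigO_U U (\<lambda>n. N (k n) (mat_ev (k n) (phi n) (sigma g) - phit n g))
                (\<lambda>n. dfct (k n) (N (k n)) R (phi n))"
  shows "\<forall>g\<in>carrier G. \<forall>h\<in>carrier G. \<forall>l\<in>carrier G.
     zero_in_MU U k N (\<lambda>n.
        pi_rep k phi sigma n g (alpha_rep G k N R phi sigma phit n h l)
        - alpha_rep G k N R phi sigma phit n (g \<otimes>\<^bsub>G\<^esub> h) l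
        + alpha_rep G k N R phi sigma phit n g (h \<otimes>\<^bsub>G\<^esub> l)
        - alpha_rep G k N R phi sigma phit n g h)"
proof -
  have grpG: "group G" and finR: "finite R" and RS: "R \<subseteq> words S" and genS: "gen ` S \<subseteq> carrier G"
    and piff: "\<And>u v. u \<in> words S \<Longrightarrow> v \<in> words S \<Longrightarrow> grp_ev G gen u = grp_ev G gen v \<longleftrightarrow> pres_eq R u v"
    using pres unfolding finite_presentation_def by auto
  define P where "P = (\<lambda>n x. mat_ev (k n) (phi n) (sigma x))"
  define d where "d = (\<lambda>n. dfct (k n) (N (k n)) R (phi n))"
  have d0: "0 \<le> d n" for n unfolding d_def by (rule dfct_nonneg[where k=k and N=N and phi=phi and S=S and R=R, OF norms phi_unitary RS finR])
  have Pu: "x \<in> carrier G \<Longrightarrow> unitary_k (k n) (P n x)" for x n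
    unfolding P_def using Mu[where k=k and N=N and phi=phi and S=S and R=R, OF norms phi_unitary RS finR] sigma by blast
  have prod: "\<exists>C. \<forall>n. N (k n) (P n x * P n y - P n (x \<otimes>\<^bsub>G\<^esub> y)) \<le> C * d n"
    if x: "x \<in> carrier G" and y: "y \<in> carrier G" for x y
  proof -
    have xy: "x \<otimes>\<^bsub>G\<^esub> y \<in> carrier G" using x y grpG by (auto intro: group.is_monoid monoid.m_closed)
    have w: "sigma x \<in> words S" "sigma y \<in> words S" "sigma (x \<otimes>\<^bsub>G\<^esub> y) \<in> words S"
      using sigma x y xy by auto
    have "grp_ev G gen (sigma x @ sigma y) = grp_ev G gen (sigma (x \<otimes>\<^bsub>G\<^esub> y))"
      using grp_ev_append[OF grpG genS w(1,2)] sigma x y xy by simp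
    then have "pres_eq R (sigma x @ sigma y) (sigma (x \<otimes>\<^bsub>G\<^esub> y))"
      using piff w by (simp add: words_append)
    then obtain C where C: "\<And>n. N (k n) (mat_ev (k n) (phi n) (filt S (sigma x @ sigma y))
        - mat_ev (k n) (phi n) (filt S (sigma (x \<otimes>\<^bsub>G\<^esub> y)))) \<le> C * d n"
      using pres_bound[where k=k and N=N and phi=phi and S=S and R=R, OF norms phi_unitary RS finR] unfolding d_def by blast
    show ?thesis
    proof (intro exI[of _ C] allI)
      fix n
      show "N (k n) (P n x * P n y - P n (x \<otimes>\<^bsub>G\<^esub> y)) \<le> C * d n"
        using C[of n] w unfolding P_def
        by (simp add: filt_words words_append Mapp[where k=k and N=N and phi=phi and S=S and R=R, OF norms phi_unitary RS finR])
    qed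
  qed
  have close: "\<exists>C\<ge>0. eventually (\<lambda>n. N (k n) (P n x - phit n x) \<le> C * d n) U"
    if x: "x \<in> carrier G" for x
  proof -
    obtain C where C: "eventually (\<lambda>n. N (k n) (P n x - phit n x) \<le> C * d n) U"
      using phit_close[OF x] unfolding bigO_U_def P_def d_def by blast
    have "eventually (\<lambda>n. N (k n) (P n x - phit n x) \<le> max C 0 * d n) U"
      using C by eventually_elim (metis d0 max.cobounded1 mult_right_mono order_trans)
    then show ?thesis by (intro exI[of _ "max C 0"]) auto
  qed
  show ?thesis
  proof (intro ballI)
    fix g h l assume g: "g \<in> carrier G" and h: "h \<in> carrier G" and l: "l \<in> carrier G"
    have gh: "g \<otimes>\<^bsub>G\<^esub> h \<in> carrier G" and hl: "h \<otimes>\<^bsub>G\<^esub> l \<in> carrier G"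
      and ghl: "g \<otimes>\<^bsub>G\<^esub> h \<otimes>\<^bsub>G\<^esub> l \<in> carrier G"
      using g h l grpG by (auto intro: group.is_monoid monoid.m_closed)
    have assoc: "g \<otimes>\<^bsub>G\<^esub> (h \<otimes>\<^bsub>G\<^esub> l) = g \<otimes>\<^bsub>G\<^esub> h \<otimes>\<^bsub>G\<^esub> l"
      using g h l grpG by (simp add: monoid.m_assoc group.is_monoid)
    obtain C1 where C1: "C1 \<ge> 0" "eventually (\<lambda>n. N (k n) (P n g - phit n g) \<le> C1 * d n) U" using close[OF g] by blast
    obtain C2 where C2: "C2 \<ge> 0" "eventually (\<lambda>n. N (k n) (P n h - phit n h) \<le> C2 * d n) U" using close[OF h] by blast
    obtain C3 where C3: "C3 \<ge> 0" "eventually (\<lambda>n. N (k n) (P n l - phit n l) \<le> C3 * d n) U" using close[OF l] by blast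
    obtain C4 where C4: "C4 \<ge> 0" "eventually (\<lambda>n. N (k n) (P n (g \<otimes>\<^bsub>G\<^esub> h) - phit n (g \<otimes>\<^bsub>G\<^esub> h)) \<le> C4 * d n) U" using close[OF gh] by blast
    obtain C5 where C5: "C5 \<ge> 0" "eventually (\<lambda>n. N (k n) (P n (h \<otimes>\<^bsub>G\<^esub> l) - phit n (h \<otimes>\<^bsub>G\<^esub> l)) \<le> C5 * d n) U" using close[OF hl] by blast
    obtain D1 where D1: "\<And>n. N (k n) (P n g * P n h - P n (g \<otimes>\<^bsub>G\<^esub> h)) \<le> D1 * d n" using prod[OF g h] by blast
    obtain D2 where D2: "\<And>n. N (k n) (P n h * P n l - P n (h \<otimes>\<^bsub>G\<^esub> l)) \<le> D2 * d n" using prod[OF h l] by blast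
    obtain D3 where D3: "\<And>n. N (k n) (P n (g \<otimes>\<^bsub>G\<^esub> h) * P n l - P n (g \<otimes>\<^bsub>G\<^esub> h \<otimes>\<^bsub>G\<^esub> l)) \<le> D3 * d n" using prod[OF gh l] by blast
    obtain D4 where D4: "\<And>n. N (k n) (P n g * P n (h \<otimes>\<^bsub>G\<^esub> l) - P n (g \<otimes>\<^bsub>G\<^esub> h \<otimes>\<^bsub>G\<^esub> l)) \<le> D4 * d n"
      using prod[OF g hl] unfolding assoc by blast
    define Cm where "Cm = C1 + C2 + C3 + C4 + C5 + \<bar>D1\<bar> + \<bar>D2\<bar> + \<bar>D3\<bar> + \<bar>D4\<bar>"
    have le: "x * d n \<le> Cm * d n" if "x \<le> Cm" for x n using that d0[of n] by (simp add: mult_right_mono)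
    have Cms: "C1 \<le> Cm" "C2 \<le> Cm" "C3 \<le> Cm" "C4 \<le> Cm" "C5 \<le> Cm" "D1 \<le> Cm" "D2 \<le> Cm" "D3 \<le> Cm" "D4 \<le> Cm"
      using C1 C2 C3 C4 C5 unfolding Cm_def by linarith+
    let ?E = "\<lambda>n. pi_rep k phi sigma n g (alpha_rep G k N R phi sigma phit n h l)
        - alpha_rep G k N R phi sigma phit n (g \<otimes>\<^bsub>G\<^esub> h) l
        + alpha_rep G k N R phi sigma phit n g (h \<otimes>\<^bsub>G\<^esub> l)
        - alpha_rep G k N R phi sigma phit n g h"
    have ev: "eventually (\<lambda>n. N (k n) (?E n) \<le> 16 * Cm\<^sup>2 * d n \<and> 0 \<le> N (k n) (?E n)) U"
      using C1(2) C2(2) C3(2) C4(2) C5(2)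
    proof eventually_elim
      case (elim n)
      let ?m = "k n"
      let ?s = "complex_of_real (1 / d n)"
      have u: "unitary_k ?m (P n g)" "unitary_k ?m (P n h)" "unitary_k ?m (P n l)" "unitary_k ?m (P n (g \<otimes>\<^bsub>G\<^esub> h))"
        "unitary_k ?m (P n (h \<otimes>\<^bsub>G\<^esub> l))" "unitary_k ?m (P n (g \<otimes>\<^bsub>G\<^esub> h \<otimes>\<^bsub>G\<^esub> l))"
        "unitary_k ?m (phit n g)" "unitary_k ?m (phit n h)" "unitary_k ?m (phit n l)" "unitary_k ?m (phit n (g \<otimes>\<^bsub>G\<^esub> h))"
        "unitary_k ?m (phit n (h \<otimes>\<^bsub>G\<^esub> l))" "unitary_k ?m (phit n (g \<otimes>\<^bsub>G\<^esub> h \<otimes>\<^bsub>G\<^esub> l))"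
        using Pu phit_unitary g h l gh hl ghl by auto
      have c: "P n g \<in> carrier_mat ?m ?m" "P n h \<in> carrier_mat ?m ?m" "P n l \<in> carrier_mat ?m ?m"
        "P n (g \<otimes>\<^bsub>G\<^esub> h) \<in> carrier_mat ?m ?m"
        "P n (h \<otimes>\<^bsub>G\<^esub> l) \<in> carrier_mat ?m ?m" "P n (g \<otimes>\<^bsub>G\<^esub> h \<otimes>\<^bsub>G\<^esub> l) \<in> carrier_mat ?m ?m"
        "phit n g \<in> carrier_mat ?m ?m" "phit n h \<in> carrier_mat ?m ?m" "phit n l \<in> carrier_mat ?m ?m"
        "phit n (g \<otimes>\<^bsub>G\<^esub> h) \<in> carrier_mat ?m ?m"
        "phit n (h \<otimes>\<^bsub>G\<^esub> l) \<in> carrier_mat ?m ?m" "phit n (g \<otimes>\<^bsub>G\<^esub> h \<otimes>\<^bsub>G\<^esub> l) \<in> carrier_mat ?m ?m"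
        using u unitary_carrier by blast+
      let ?W = "P n g * ((phit n h * phit n l - phit n (h \<otimes>\<^bsub>G\<^esub> l)) * adj (P n (h \<otimes>\<^bsub>G\<^esub> l))) * adj (P n g)
        - (phit n (g \<otimes>\<^bsub>G\<^esub> h) * phit n l - phit n (g \<otimes>\<^bsub>G\<^esub> h \<otimes>\<^bsub>G\<^esub> l)) * adj (P n (g \<otimes>\<^bsub>G\<^esub> h \<otimes>\<^bsub>G\<^esub> l))
        + (phit n g * phit n (h \<otimes>\<^bsub>G\<^esub> l) - phit n (g \<otimes>\<^bsub>G\<^esub> h \<otimes>\<^bsub>G\<^esub> l)) * adj (P n (g \<otimes>\<^bsub>G\<^esub> h \<otimes>\<^bsub>G\<^esub> l))
        - (phit n g * phit n h - phit n (g \<otimes>\<^bsub>G\<^esub> h)) * adj (P n (g \<otimes>\<^bsub>G\<^esub> h))"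
      have key: "N ?m ?W \<le> 16 * (Cm * d n)\<^sup>2"
        by (rule N_key[OF norms u])
           (use elim D1[of n] D2[of n] D3[of n] D4[of n] le[OF Cms(1), of n] le[OF Cms(2), of n] le[OF Cms(3), of n] le[OF Cms(4), of n]
             le[OF Cms(5), of n] le[OF Cms(6), of n] le[OF Cms(7), of n] le[OF Cms(8), of n] le[OF Cms(9), of n] in \<open>linarith+\<close>)
      have cW: "?W \<in> carrier_mat ?m ?m" using c by (simp add: sqc)
      show ?case
      proof (cases "d n > 0")
        case True
        have dp: "dfct (k n) (N (k n)) R (phi n) > 0" using True unfolding d_def by simp
        have "?E n = P n g * ((?s \<cdot>\<^sub>m (phit n h * phit n l - phit n (h \<otimes>\<^bsub>G\<^esub> l))) * adj (P n (h \<otimes>\<^bsub>G\<^esub> l))) * adj (P n g)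
        - (?s \<cdot>\<^sub>m (phit n (g \<otimes>\<^bsub>G\<^esub> h) * phit n l - phit n (g \<otimes>\<^bsub>G\<^esub> h \<otimes>\<^bsub>G\<^esub> l))) * adj (P n (g \<otimes>\<^bsub>G\<^esub> h \<otimes>\<^bsub>G\<^esub> l))
        + (?s \<cdot>\<^sub>m (phit n g * phit n (h \<otimes>\<^bsub>G\<^esub> l) - phit n (g \<otimes>\<^bsub>G\<^esub> h \<otimes>\<^bsub>G\<^esub> l))) * adj (P n (g \<otimes>\<^bsub>G\<^esub> h \<otimes>\<^bsub>G\<^esub> l))
        - (?s \<cdot>\<^sub>m (phit n g * phit n h - phit n (g \<otimes>\<^bsub>G\<^esub> h))) * adj (P n (g \<otimes>\<^bsub>G\<^esub> h))"
          unfolding pi_rep_def alpha_rep_def c_rep_def phiU_rep_def Let_def using dp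
          by (simp add: P_def d_def assoc)
        also have "\<dots> = ?s \<cdot>\<^sub>m ?W"
          by (rule smult_W) (use c in \<open>auto simp: sqc\<close>)
        finally have Eq: "?E n = ?s \<cdot>\<^sub>m ?W" .
        have cm: "cmod ?s = 1 / d n" using True by (simp only: norm_of_real) simp
        have "N ?m (?E n) = (1 / d n) * N ?m ?W"
          unfolding Eq using N_smult[OF norms cW, of ?s] unfolding cm .
        also have "\<dots> \<le> (1 / d n) * (16 * (Cm * d n)\<^sup>2)"
          using key True by (intro mult_left_mono) auto
        also have "\<dots> = 16 * Cm\<^sup>2 * d n" using True by (simp add: power2_eq_square field_simps)
        finally show ?thesis
          using N_nonneg[OF norms, of "?E n"] cW Eq by simp
      next
        case False
        have dp: "\<not> dfct (k n) (N (k n)) R (phi n) > 0" using False unfolding d_def by simp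
        have "?E n = 0\<^sub>m ?m ?m"
          unfolding pi_rep_def alpha_rep_def c_rep_def phiU_rep_def Let_def using dp c
          by (simp add: P_def adj_def assoc) (intro eq_matI, auto)
        then show ?thesis using N_zero[OF norms] d0[of n] by simp
      qed
    qed
    have lim: "((\<lambda>n. 16 * Cm\<^sup>2 * d n) \<longlongrightarrow> 16 * Cm\<^sup>2 * 0) U"
      using def_lim unfolding d_def by (intro tendsto_intros)
    show "zero_in_MU U k N ?E" unfolding zero_in_MU_def
      by (rule tendsto_sandwich[of "\<lambda>_. 0" _ _ "\<lambda>n. 16 * Cm\<^sup>2 * d n"])
         (use ev lim in \<open>auto elim: eventually_mono\<close>)
  qed
qed


end
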